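(* Let $A$ be a unital C*-algebra and let $F\subseteq\Sigma_\ast$ be closed. Then $F$ is irreducible (i.e. whenever $F=F_1\cup F_2$ with $F_1,F_2$ closed, then $F=F_1$ or $F=F_2$) if and only if: (1) for every $C\in\mathcal C(A)$, if $F_C\ne\emptyset$ then $F_C$ is a singleton; and (2) for all $C_1,C_2\in\mathcal C(A)$ with $F_{C_1}\ne\emptyset$ and $F_{C_2}\ne\emptyset$, there is $C_3\in\mathcal C(A)$ with $C_1,C_2\subseteq C_3$ and $F_{C_3}\neq\emptyset$.
   Context: Let $A$ be a unital C*-algebra. $\mathcal C(A)$ is the poset (under inclusion) of commutative C*-subalgebras of $A$ containing the unit of $A$. For $C\in\mathcal C(A)$, $\Sigma_C$ is its Gelfand spectrum; for $C\subseteq C'$ and $\lambda'\in\Sigma_{C'}$, $\lambda'|_C$ is the restriction. Let $\Sigma=\{(C,\lambda)\mid C\in\mathcal C(A),\lambda\in\Sigma_C\}$ and $U_C=\{\lambda\mid(C,\lambda)\in U\}$ for $U\subseteq\Sigma$. The space $\Sigma_\ast$ is $\Sigma$ with the topology in which $U$ is open iff (1) each $U_C$ is open in $\Sigma_C$, and (2) if $\lambda\in U_C$, $C\subseteq C'$ and $\lambda'\in\Sigma_{C'}$ with $\lambda'|_C=\lambda$, then $\lambda'\in U_{C'}$. *)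

theory Defs
  imports "HOL-Analysis.Analysis"
begin

text \<open>HOL-Analysis has no complex vector spaces / C*-algebras,
so we axiomatize a unital complex Banach *-algebra satisfying the C*-identity as a
type class on top of real_normed_algebra_1 and banach.\<close>

class cstar_algebra = real_normed_algebra_1 + banach +
  fixes scaleC :: "complex \<Rightarrow> 'a \<Rightarrow> 'a"
    and cstar :: "'a \<Rightarrow> 'a"
  assumes scaleC_of_real: "scaleC (of_real r) x = scaleR r x"
    and scaleC_add_right: "scaleC c (x + y) = scaleC c x + scaleC c y"
    and scaleC_add_left: "scaleC (c + d) x = scaleC c x + scaleC d x"
    and scaleC_scaleC: "scaleC c (scaleC d x) = scaleC (c * d) x"
    and scaleC_mult_left: "scaleC c (x * y) = scaleC c x * y"
    and scaleC_mult_right: "scaleC c (x * y) = x * scaleC c y"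
    and norm_scaleC: "norm (scaleC c x) = cmod c * norm x"
    and cstar_add: "cstar (x + y) = cstar x + cstar y"
    and cstar_scaleC: "cstar (scaleC c x) = scaleC (cnj c) (cstar x)"
    and cstar_mult: "cstar (x * y) = cstar y * cstar x"
    and cstar_cstar: "cstar (cstar x) = x"
    and cstar_identity: "norm (cstar x * x) = norm x ^ 2"

definition comm_subalgs :: "('a::cstar_algebra) set set" where
  "comm_subalgs = {C. 1 \<in> C
      \<and> (\<forall>x\<in>C. \<forall>y\<in>C. x + y \<in> C)
      \<and> (\<forall>c. \<forall>x\<in>C. scaleC c x \<in> C)
      \<and> (\<forall>x\<in>C. \<forall>y\<in>C. x * y \<in> C)
      \<and> (\<forall>x\<in>C. cstar x \<in> C)
      \<and> closed C
      \<and> (\<forall>x\<in>C. \<forall>y\<in>C. x * y = y * x)}"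

text \<open>Gelfand spectrum of C: nonzero multiplicative complex-linear functionals on C,
represented as functions extensional on C (value undefined outside C).\<close>
definition gelfand_spectrum :: "('a::cstar_algebra) set \<Rightarrow> ('a \<Rightarrow> complex) set" where
  "gelfand_spectrum C = {l. l \<in> extensional C
      \<and> (\<forall>x\<in>C. \<forall>y\<in>C. l (x + y) = l x + l y)
      \<and> (\<forall>c. \<forall>x\<in>C. l (scaleC c x) = c * l x)
      \<and> (\<forall>x\<in>C. \<forall>y\<in>C. l (x * y) = l x * l y)
      \<and> (\<exists>x\<in>C. l x \<noteq> 0)}"

definition gelfand_top :: "('a::cstar_algebra) set \<Rightarrow> ('a \<Rightarrow> complex) topology" where
  "gelfand_top C = subtopology (product_topology (\<lambda>_. euclidean) C) (gelfand_spectrum C)"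

definition Sigma_pairs :: "('a::cstar_algebra set \<times> ('a \<Rightarrow> complex)) set" where
  "Sigma_pairs = {(C, l). C \<in> comm_subalgs \<and> l \<in> gelfand_spectrum C}"

definition fiber :: "('a set \<times> ('a \<Rightarrow> complex)) set \<Rightarrow> 'a set \<Rightarrow> ('a \<Rightarrow> complex) set" where
  "fiber U C = {l. (C, l) \<in> U}"

definition star_open :: "('a::cstar_algebra set \<times> ('a \<Rightarrow> complex)) set \<Rightarrow> bool" where
  "star_open U \<longleftrightarrow> U \<subseteq> Sigma_pairs
     \<and> (\<forall>C\<in>comm_subalgs. openin (gelfand_top C) (fiber U C))
     \<and> (\<forall>C l C' l'. l \<in> fiber U C \<and> C \<in> comm_subalgs \<and> C' \<in> comm_subalgs \<and> C \<subseteq> C'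
            \<and> l' \<in> gelfand_spectrum C' \<and> restrict l' C = l \<longrightarrow> l' \<in> fiber U C')"

definition star_closed :: "('a::cstar_algebra set \<times> ('a \<Rightarrow> complex)) set \<Rightarrow> bool" where
  "star_closed F \<longleftrightarrow> F \<subseteq> Sigma_pairs \<and> star_open (Sigma_pairs - F)"

definition star_irreducible :: "('a::cstar_algebra set \<times> ('a \<Rightarrow> complex)) set \<Rightarrow> bool" where
  "star_irreducible F \<longleftrightarrow> (\<forall>F1 F2. star_closed F1 \<and> star_closed F2 \<and> F = F1 \<union> F2
      \<longrightarrow> F = F1 \<or> F = F2)"

end

theory Submission
  imports Defs
begin

lemma Sigma_mem: "(C, l) \<in> Sigma_pairs \<longleftrightarrow> C \<in> comm_subalgs \<and> l \<in> gelfand_spectrum C"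
  by (simp add: Sigma_pairs_def)

lemma topspace_gelfand: "topspace (gelfand_top C) = gelfand_spectrum C"
  unfolding gelfand_top_def gelfand_spectrum_def
  by (auto simp: topspace_product_topology PiE_def)

lemma fiber_Un: "fiber (A \<union> B) C = fiber A C \<union> fiber B C"
  by (auto simp: fiber_def)

lemma open_Un_star:
  assumes a: "star_open A" and b: "star_open B"
  shows "star_open (A \<union> B)"
proof -
  note a' = a[unfolded star_open_def] and b' = b[unfolded star_open_def]
  note a1 = conjunct1[OF a'] and a2 = conjunct1[OF conjunct2[OF a']] and a3 = conjunct2[OF conjunct2[OF a']]
  note b1 = conjunct1[OF b'] and b2 = conjunct1[OF conjunct2[OF b']] and b3 = conjunct2[OF conjunct2[OF b']]
  have "A \<union> B \<subseteq> Sigma_pairs" using a1 b1 by blast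
  moreover have "\<forall>C\<in>comm_subalgs. openin (gelfand_top C) (fiber (A \<union> B) C)"
    unfolding fiber_Un
  proof (intro ballI)
    fix C :: "'a set" assume C: "C \<in> comm_subalgs"
    have "openin (gelfand_top C) (fiber A C)" using a2 C by (rule bspec)
    moreover have "openin (gelfand_top C) (fiber B C)" using b2 C by (rule bspec)
    ultimately show "openin (gelfand_top C) (fiber A C \<union> fiber B C)" by (rule openin_Un)
  qed
  moreover have "\<forall>C l C' l'. l \<in> fiber (A \<union> B) C \<and> C \<in> comm_subalgs \<and> C' \<in> comm_subalgs \<and> C \<subseteq> C'
            \<and> l' \<in> gelfand_spectrum C' \<and> restrict l' C = l \<longrightarrow> l' \<in> fiber (A \<union> B) C'"
    unfolding fiber_Un
  proof (intro allI impI)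
    fix C l C' l'
    assume h: "l \<in> fiber A C \<union> fiber B C \<and> C \<in> comm_subalgs \<and> C' \<in> comm_subalgs \<and> C \<subseteq> C'
            \<and> l' \<in> gelfand_spectrum C' \<and> restrict l' C = l"
    then consider "l \<in> fiber A C" | "l \<in> fiber B C" by blast
    then show "l' \<in> fiber A C' \<union> fiber B C'"
    proof cases
      case 1 then have "l' \<in> fiber A C'" using a3 h by blast
      then show ?thesis by (rule UnI1)
    next
      case 2 then have "l' \<in> fiber B C'" using b3 h by blast
      then show ?thesis by (rule UnI2)
    qed
  qed
  ultimately show ?thesis unfolding star_open_def by (intro conjI)
qed

lemma closed_diff_star: "star_closed F \<Longrightarrow> star_open U \<Longrightarrow> star_closed (F - U)"
proof -
  assume a: "star_closed F" "star_open U"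
  have "Sigma_pairs - (F - U) = (Sigma_pairs - F) \<union> U"
    using a unfolding star_open_def star_closed_def by auto
  then show ?thesis using a open_Un_star unfolding star_closed_def by auto
qed

lemma up_open: "star_open {p::('a::cstar_algebra set \<times> ('a \<Rightarrow> complex)). p \<in> Sigma_pairs \<and> C1 \<subseteq> fst p}"
  unfolding star_open_def
proof (intro conjI ballI allI impI)
  fix C :: "'a set" assume C: "C \<in> comm_subalgs"
  show "openin (gelfand_top C) (fiber {p \<in> Sigma_pairs. C1 \<subseteq> fst p} C)"
  proof (cases "C1 \<subseteq> C")
    case True
    then have "fiber {p \<in> Sigma_pairs. C1 \<subseteq> fst p} C = topspace (gelfand_top C)"
      using C by (auto simp: fiber_def topspace_gelfand Sigma_mem)
    then show ?thesis by simp
  next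
    case False
    then have "fiber {p \<in> Sigma_pairs. C1 \<subseteq> fst p} C = {}"
      by (auto simp: fiber_def)
    then show ?thesis by simp
  qed
qed (auto simp: fiber_def Sigma_mem)

lemma eval_open:
  fixes x :: "'a::cstar_algebra"
  assumes x0: "x \<in> C0" and oB: "open B"
  shows "star_open {p \<in> Sigma_pairs. C0 \<subseteq> fst p \<and> snd p x \<in> B}"
proof -
  let ?U = "{p \<in> Sigma_pairs. C0 \<subseteq> fst p \<and> snd p x \<in> B}"
  have s1: "?U \<subseteq> Sigma_pairs" by blast
  have s2: "\<forall>C\<in>comm_subalgs. openin (gelfand_top C) (fiber ?U C)"
  proof (intro ballI)
    fix C :: "'a set" assume C: "C \<in> comm_subalgs"
    show "openin (gelfand_top C) (fiber ?U C)"
    proof (cases "C0 \<subseteq> C")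
      case True
      then have xC: "x \<in> C" using x0 by blast
      have cm0: "continuous_map (product_topology (\<lambda>_. euclidean) C) euclidean (\<lambda>l. l x)"
        using continuous_map_product_projection[of x C "\<lambda>_. euclidean"] xC by simp
      have cm: "continuous_map (gelfand_top C) euclidean (\<lambda>l. l x)"
        unfolding gelfand_top_def by (rule continuous_map_from_subtopology[OF cm0])
      have eq: "fiber ?U C = {l \<in> topspace (gelfand_top C). l x \<in> B}"
        unfolding fiber_def topspace_gelfand using C True by (auto simp: Sigma_mem)
      have "openin euclidean B" using oB by (simp only: open_openin)
      then have "openin (gelfand_top C) {l \<in> topspace (gelfand_top C). l x \<in> B}"
        by (rule openin_continuous_map_preimage[OF cm])
      then show ?thesis unfolding eq .
    next
      case False
      then have "fiber ?U C = {}" unfolding fiber_def by auto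
      then show ?thesis by (simp only: openin_empty)
    qed
  qed
  have s3: "\<forall>C l C' l'. l \<in> fiber ?U C \<and> C \<in> comm_subalgs \<and> C' \<in> comm_subalgs \<and> C \<subseteq> C'
            \<and> l' \<in> gelfand_spectrum C' \<and> restrict l' C = l \<longrightarrow> l' \<in> fiber ?U C'"
  proof (intro allI impI)
    fix C l C' l'
    assume h: "l \<in> fiber ?U C \<and> C \<in> comm_subalgs \<and> C' \<in> comm_subalgs \<and> C \<subseteq> C'
            \<and> l' \<in> gelfand_spectrum C' \<and> restrict l' C = l"
    then have lU: "(C, l) \<in> ?U" by (simp add: fiber_def)
    then have c0: "C0 \<subseteq> C" and lx: "l x \<in> B" by auto
    have xC: "x \<in> C" using c0 x0 by blast
    have "l' x = l x" using h xC by auto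
    then have "(C', l') \<in> ?U" using h c0 lx by (auto simp: Sigma_mem)
    then show "l' \<in> fiber ?U C'" by (simp add: fiber_def)
  qed
  show ?thesis unfolding star_open_def using s1 s2 s3 by (intro conjI)
qed

lemma restrict_spec:
  assumes "l \<in> gelfand_spectrum C3" "C1 \<in> comm_subalgs" "C1 \<subseteq> C3"
  shows "restrict l C1 \<in> gelfand_spectrum C1"
proof -
  have one: "1 \<in> C1" using assms(2) by (simp add: comm_subalgs_def)
  obtain x where x: "x \<in> C3" "l x \<noteq> 0" using assms(1) by (auto simp: gelfand_spectrum_def)
  have add: "\<forall>a\<in>C3. \<forall>b\<in>C3. l (a + b) = l a + l b" using assms(1) by (simp add: gelfand_spectrum_def)
  have sc: "\<forall>c. \<forall>a\<in>C3. l (scaleC c a) = c * l a" using assms(1) by (simp add: gelfand_spectrum_def)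
  have mul: "\<forall>a\<in>C3. \<forall>b\<in>C3. l (a * b) = l a * l b" using assms(1) by (simp add: gelfand_spectrum_def)
  have "1 \<in> C3" using one assms(3) by auto
  have "l x = l (x * 1)" by simp
  also have "\<dots> = l x * l 1" using mul x(1) \<open>1 \<in> C3\<close> by blast
  finally have "l x * l 1 = l x * 1" by simp
  then have l1: "l 1 = 1" using x(2) by (metis mult_left_cancel)
  have "restrict l C1 \<in> extensional C1" by simp
  moreover have "\<exists>y\<in>C1. restrict l C1 y \<noteq> 0" using one l1 by (intro bexI[of _ 1]) auto
  moreover have "\<forall>a\<in>C1. \<forall>b\<in>C1. restrict l C1 (a + b) = restrict l C1 a + restrict l C1 b"
  proof (intro ballI)
    fix a b assume ab: "a \<in> C1" "b \<in> C1"
    then have "a + b \<in> C1" using assms(2) by (simp add: comm_subalgs_def)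
    then show "restrict l C1 (a + b) = restrict l C1 a + restrict l C1 b"
      using ab add sc assms(3) by simp (meson subsetD)
  qed
  moreover have "\<forall>c. \<forall>a\<in>C1. restrict l C1 (scaleC c a) = c * restrict l C1 a"
  proof (intro ballI allI)
    fix c a assume ab: "a \<in> C1"
    then have "scaleC c a \<in> C1" using assms(2) by (simp add: comm_subalgs_def)
    then show "restrict l C1 (scaleC c a) = c * restrict l C1 a"
      using ab add sc assms(3) by simp (meson subsetD)
  qed
  moreover have "\<forall>a\<in>C1. \<forall>b\<in>C1. restrict l C1 (a * b) = restrict l C1 a * restrict l C1 b"
  proof (intro ballI)
    fix a b assume ab: "a \<in> C1" "b \<in> C1"
    then have "a * b \<in> C1" using assms(2) by (simp add: comm_subalgs_def)
    then show "restrict l C1 (a * b) = restrict l C1 a * restrict l C1 b"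
      using ab mul assms(3) by auto
  qed
  ultimately show ?thesis unfolding gelfand_spectrum_def mem_Collect_eq by (intro conjI)
qed

lemma down_closed:
  assumes "star_closed F1" "(C3, l3) \<in> F1" "C1 \<in> comm_subalgs" "C1 \<subseteq> C3"
  shows "(C1, restrict l3 C1) \<in> F1"
proof (rule ccontr)
  assume n: "(C1, restrict l3 C1) \<notin> F1"
  have s: "(C3, l3) \<in> Sigma_pairs" using assms unfolding star_closed_def by auto
  then have "restrict l3 C1 \<in> gelfand_spectrum C1" using restrict_spec assms
    by (auto simp: Sigma_mem)
  then have "restrict l3 C1 \<in> fiber (Sigma_pairs - F1) C1"
    using n assms(3) by (auto simp: fiber_def Sigma_mem)
  moreover have "star_open (Sigma_pairs - F1)" using assms(1) by (simp add: star_closed_def)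
  moreover have "C3 \<in> comm_subalgs" "l3 \<in> gelfand_spectrum C3" using s by (auto simp: Sigma_mem)
  ultimately have "l3 \<in> fiber (Sigma_pairs - F1) C3"
    using assms(3,4) unfolding star_open_def by blast
  then show False using assms(2) by (auto simp: fiber_def)
qed

theorem lemma2p24:
  fixes F :: "('a::cstar_algebra set \<times> ('a \<Rightarrow> complex)) set"
  assumes "star_closed F"
  shows "star_irreducible F \<longleftrightarrow>
    ((\<forall>C\<in>comm_subalgs. fiber F C \<noteq> {} \<longrightarrow> (\<exists>l. fiber F C = {l}))
     \<and> (\<forall>C1\<in>comm_subalgs. \<forall>C2\<in>comm_subalgs. fiber F C1 \<noteq> {} \<and> fiber F C2 \<noteq> {} \<longrightarrow>
          (\<exists>C3\<in>comm_subalgs. C1 \<subseteq> C3 \<and> C2 \<subseteq> C3 \<and> fiber F C3 \<noteq> {})))"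
proof
  have FS: "F \<subseteq> Sigma_pairs" using assms by (simp add: star_closed_def)
  assume irr: "star_irreducible F"
  show "((\<forall>C\<in>comm_subalgs. fiber F C \<noteq> {} \<longrightarrow> (\<exists>l. fiber F C = {l}))
     \<and> (\<forall>C1\<in>comm_subalgs. \<forall>C2\<in>comm_subalgs. fiber F C1 \<noteq> {} \<and> fiber F C2 \<noteq> {} \<longrightarrow>
          (\<exists>C3\<in>comm_subalgs. C1 \<subseteq> C3 \<and> C2 \<subseteq> C3 \<and> fiber F C3 \<noteq> {})))"
  proof (intro conjI ballI impI)
    fix C assume C: "C \<in> comm_subalgs" and ne: "fiber F C \<noteq> {}"
    show "\<exists>l. fiber F C = {l}"
    proof (rule ccontr)
      assume ns: "\<nexists>l. fiber F C = {l}"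
      obtain lam where lam: "lam \<in> fiber F C" using ne by auto
      obtain mu where mu: "mu \<in> fiber F C" "mu \<noteq> lam" using ns lam by blast
      have sl: "lam \<in> gelfand_spectrum C" "mu \<in> gelfand_spectrum C"
        using lam mu FS by (auto simp: fiber_def Sigma_mem)
      have "\<exists>x\<in>C. lam x \<noteq> mu x"
      proof (rule ccontr)
        assume "\<not> (\<exists>x\<in>C. lam x \<noteq> mu x)"
        then have "lam = mu" using sl extensionalityI[of lam C mu]
          by (auto simp: gelfand_spectrum_def)
        then show False using mu by simp
      qed
      then obtain x where x: "x \<in> C" "lam x \<noteq> mu x" by blast
      define r where "r = dist (lam x) (mu x) / 2"
      have r: "r > 0" using x by (simp add: r_def)
      define V where "V = {p \<in> Sigma_pairs. C \<subseteq> fst p \<and> snd p x \<in> ball (lam x) r}"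
      define W where "W = {p \<in> Sigma_pairs. C \<subseteq> fst p \<and> snd p x \<in> ball (mu x) r}"
      have disj: "ball (lam x) r \<inter> ball (mu x) r = {}"
      proof (rule ccontr)
        assume "ball (lam x) r \<inter> ball (mu x) r \<noteq> {}"
        then obtain z where "dist (lam x) z < r" "dist (mu x) z < r" by auto
        moreover have "dist (lam x) (mu x) \<le> dist (lam x) z + dist (mu x) z" by (rule dist_triangle2)
        ultimately show False unfolding r_def by linarith
      qed
      have "V \<inter> W = {}" using disj unfolding V_def W_def by blast
      then have eq: "F = (F - V) \<union> (F - W)" by blast
      have c1: "star_closed (F - V)" unfolding V_def by (rule closed_diff_star[OF assms eval_open[OF x(1)]]) simp
      have c2: "star_closed (F - W)" unfolding W_def by (rule closed_diff_star[OF assms eval_open[OF x(1)]]) simp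
      have "(C, lam) \<in> F" "(C, mu) \<in> F" using lam mu by (auto simp: fiber_def)
      moreover have "(C, lam) \<in> V" "(C, mu) \<in> W" using FS calculation r
        unfolding V_def W_def by auto
      ultimately have "F \<noteq> F - V" "F \<noteq> F - W" by auto
      then show False using irr c1 c2 eq unfolding star_irreducible_def by blast
    qed
  next
    fix C1 C2 assume C: "C1 \<in> comm_subalgs" "C2 \<in> comm_subalgs"
      and ne: "fiber F C1 \<noteq> {} \<and> fiber F C2 \<noteq> {}"
    show "\<exists>C3\<in>comm_subalgs. C1 \<subseteq> C3 \<and> C2 \<subseteq> C3 \<and> fiber F C3 \<noteq> {}"
    proof (rule ccontr)
      assume nc: "\<not> ?thesis"
      define V where "V = {p \<in> Sigma_pairs. C1 \<subseteq> fst p}"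
      define W where "W = {p \<in> Sigma_pairs. C2 \<subseteq> fst p}"
      have "F \<inter> V \<inter> W = {}"
      proof (rule ccontr)
        assume "F \<inter> V \<inter> W \<noteq> {}"
        then obtain C3 l where "(C3, l) \<in> F \<inter> V \<inter> W" by auto
        then show False using nc FS unfolding V_def W_def
          by (auto simp: fiber_def Sigma_mem)
      qed
      then have eq: "F = (F - V) \<union> (F - W)" by blast
      have c1: "star_closed (F - V)" unfolding V_def by (rule closed_diff_star[OF assms up_open])
      have c2: "star_closed (F - W)" unfolding W_def by (rule closed_diff_star[OF assms up_open])
      obtain l1 l2 where "(C1, l1) \<in> F" "(C2, l2) \<in> F" using ne by (auto simp: fiber_def)
      moreover have "(C1, l1) \<in> V" "(C2, l2) \<in> W" using FS calculation
        unfolding V_def W_def by auto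
      ultimately have "F \<noteq> F - V" "F \<noteq> F - W" by auto
      then show False using irr c1 c2 eq unfolding star_irreducible_def by blast
    qed
  qed
next
  have FS: "F \<subseteq> Sigma_pairs" using assms by (simp add: star_closed_def)
  assume h: "((\<forall>C\<in>comm_subalgs. fiber F C \<noteq> {} \<longrightarrow> (\<exists>l. fiber F C = {l}))
     \<and> (\<forall>C1\<in>comm_subalgs. \<forall>C2\<in>comm_subalgs. fiber F C1 \<noteq> {} \<and> fiber F C2 \<noteq> {} \<longrightarrow>
          (\<exists>C3\<in>comm_subalgs. C1 \<subseteq> C3 \<and> C2 \<subseteq> C3 \<and> fiber F C3 \<noteq> {})))"
  then have h1: "\<And>C. C\<in>comm_subalgs \<Longrightarrow> fiber F C \<noteq> {} \<Longrightarrow> \<exists>l. fiber F C = {l}"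
    and h2: "\<And>C1 C2. C1\<in>comm_subalgs \<Longrightarrow> C2\<in>comm_subalgs \<Longrightarrow> fiber F C1 \<noteq> {} \<Longrightarrow> fiber F C2 \<noteq> {} \<Longrightarrow>
          (\<exists>C3\<in>comm_subalgs. C1 \<subseteq> C3 \<and> C2 \<subseteq> C3 \<and> fiber F C3 \<noteq> {})" by blast+
  have key: "(C, l) \<in> Fa" if cl: "star_closed Fa" "Fa \<subseteq> F" and p: "(C, l) \<in> F"
    and q: "(C3, l3) \<in> Fa" "C3 \<in> comm_subalgs" "C \<subseteq> C3" "fiber F C3 = {l3}" for Fa C l C3 l3
  proof -
    have C: "C \<in> comm_subalgs" using p FS by (auto simp: Sigma_mem)
    have "(C, restrict l3 C) \<in> Fa" using down_closed[OF cl(1) q(1) C q(3)] .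
    then have "restrict l3 C \<in> fiber F C" using cl by (auto simp: fiber_def)
    moreover have "l \<in> fiber F C" using p by (simp add: fiber_def)
    moreover obtain m where "fiber F C = {m}" using h1[OF C] p by (auto simp: fiber_def)
    ultimately show ?thesis using \<open>(C, restrict l3 C) \<in> Fa\<close> by auto
  qed
  show "star_irreducible F"
    unfolding star_irreducible_def
  proof (intro allI impI)
    fix F1 F2 assume a: "star_closed F1 \<and> star_closed F2 \<and> F = F1 \<union> F2"
    show "F = F1 \<or> F = F2"
    proof (rule ccontr)
      assume "\<not> (F = F1 \<or> F = F2)"
      then obtain C1 l1 C2 l2 where p: "(C1, l1) \<in> F" "(C1, l1) \<notin> F1"
        and q: "(C2, l2) \<in> F" "(C2, l2) \<notin> F2" using a by auto
      have C: "C1 \<in> comm_subalgs" "C2 \<in> comm_subalgs" using p q FS by (auto simp: Sigma_mem)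
      obtain C3 where C3: "C3 \<in> comm_subalgs" "C1 \<subseteq> C3" "C2 \<subseteq> C3" "fiber F C3 \<noteq> {}"
        using h2[OF C] p q by (auto simp: fiber_def)
      obtain l3 where l3: "fiber F C3 = {l3}" using h1[OF C3(1) C3(4)] by auto
      then have "(C3, l3) \<in> F1 \<or> (C3, l3) \<in> F2" using a by (auto simp: fiber_def)
      then show False
      proof
        assume "(C3, l3) \<in> F1"
        then have "(C1, l1) \<in> F1" using key[of F1 C1 l1 C3 l3] a p C3 l3 by auto
        then show False using p by simp
      next
        assume "(C3, l3) \<in> F2"
        then have "(C2, l2) \<in> F2" using key[of F2 C2 l2 C3 l3] a q C3 l3 by auto
        then show False using q by simp
      qed
    qed
  qed
qed

end
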